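(* Let $L$ be a loss function, $n_1<n$, $n_2=n-n_1$, and let $S_j$ be uniformly distributed on the $n_1$-subsets of $N=\{1,\dots,n\}$. Suppose that the (asymptotic) values of $\mathbb{E}[L(\hat y_{S_j,i},y_i)\mid S_j,i]$ and of $\mathbb{E}[L(\hat y_{S_j,i},y_i)L(\hat y_{S_j,i'},y_{i'})\mid S_j,i,i']$ for $i,i'\in S_j^c$ do not depend on the particular realization of $S_j$; call them $\mathsf{e}_i$ and $\mathsf{e}_{i,i'}$ respectively (so $\mathsf{e}_{i,i}=\mathbb{E}[L^2(\hat y_{S_j,i},y_i)\mid S_j,i]$). Then the (asymptotic) values of $\mathbb{E}(\hat\mu_j)$ and $\operatorname{Var}(\hat\mu_j)$ are $$\mathbb{E}(\hat\mu_j)=\frac1n\sum_{i=1}^n\mathsf{e}_i,$$ $$\operatorname{Var}(\hat\mu_j)=\frac{1}{n^2n_2}\Big\{\sum_{i=1}^n\big(n\,\mathsf{e}_{i,i}-n_2\,\mathsf{e}_i^2\big)+\frac{2}{n-1}\sum_{1\le i<i'\le n}\big[n(n_2-1)\mathsf{e}_{i,i'}-(n-1)n_2\,\mathsf{e}_i\mathsf{e}_{i'}\big]\Big\}.$$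
   Context: Data $(y_i,\mathbf{x}_i)$, $i=1,\dots,n$. For a training index set $S_j$, $\hat y_{S_j,i}$ is the prediction for observation $i$ of the rule fitted on $\{(y_k,\mathbf{x}_k):k\in S_j\}$, and the average test set error is $\hat\mu_j=\frac{1}{n_2}\sum_{i\in S_j^c}L(\hat y_{S_j,i},y_i)$. *)

theory Defs
  imports "HOL-Probability.Probability"
begin

definition mu_hat :: "('y \<Rightarrow> 'y \<Rightarrow> real) \<Rightarrow> (nat set \<Rightarrow> nat \<Rightarrow> 'w \<Rightarrow> 'y) \<Rightarrow>
    (nat \<Rightarrow> 'w \<Rightarrow> 'y) \<Rightarrow> nat \<Rightarrow> nat \<Rightarrow> nat set \<Rightarrow> 'w \<Rightarrow> real" where
  "mu_hat L yhat y n n2 S w =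
     (1 / real n2) * (\<Sum>i\<in>{1..n} - S. L (yhat S i w) (y i w))"

end

theory Submission
  imports Defs
begin

lemma count1:
  assumes "i \<in> {1..n::nat}"
  shows "card {s. (s \<subseteq> {1..n} \<and> card s = k) \<and> i \<notin> s} = (n-1) choose k"
proof -
  have "{s. (s \<subseteq> {1..n} \<and> card s = k) \<and> i \<notin> s} = {s. s \<subseteq> {1..n}-{i} \<and> card s = k}" by auto
  moreover have "card ({1..n}-{i}) = n - 1" using assms by simp
  ultimately show ?thesis using n_subsets[of "{1..n}-{i}" k] by simp
qed

lemma count2:
  assumes "i \<in> {1..n::nat}" "i' \<in> {1..n}" "i \<noteq> i'"
  shows "card {s. (s \<subseteq> {1..n} \<and> card s = k) \<and> i \<notin> s \<and> i' \<notin> s} = (n-2) choose k"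
proof -
  have "{s. (s \<subseteq> {1..n} \<and> card s = k) \<and> i \<notin> s \<and> i' \<notin> s} = {s. s \<subseteq> {1..n}-{i,i'} \<and> card s = k}" by auto
  moreover have "card ({1..n}-{i,i'}) = n - 2" using assms by (simp add: card_Diff_subset)
  ultimately show ?thesis using n_subsets[of "{1..n}-{i,i'}" k] by simp
qed

lemma swap1:
  fixes g :: "nat \<Rightarrow> real"
  assumes "finite V" "finite N"
  shows "(\<Sum>s\<in>V. \<Sum>i\<in>N-s. g i) = (\<Sum>i\<in>N. g i * card {s\<in>V. i \<notin> s})"
proof -
  have "(\<Sum>s\<in>V. \<Sum>i\<in>N-s. g i) = (\<Sum>s\<in>V. \<Sum>i\<in>N. if i \<notin> s then g i else 0)"
    by (rule sum.cong[OF refl]) (simp add: sum.inter_filter[OF assms(2), symmetric] set_diff_eq)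
  also have "\<dots> = (\<Sum>i\<in>N. \<Sum>s\<in>V. if i \<notin> s then g i else 0)" by (rule sum.swap)
  also have "\<dots> = (\<Sum>i\<in>N. g i * card {s\<in>V. i \<notin> s})"
    by (rule sum.cong[OF refl]) (simp add: sum.If_cases[OF assms(1)] Int_def)
  finally show ?thesis .
qed

lemma swap2:
  fixes g :: "nat \<Rightarrow> nat \<Rightarrow> real"
  assumes "finite V" "finite N"
  shows "(\<Sum>s\<in>V. \<Sum>i\<in>N-s. \<Sum>i'\<in>N-s. g i i') = (\<Sum>i\<in>N. \<Sum>i'\<in>N. g i i' * card {s\<in>V. i \<notin> s \<and> i' \<notin> s})"
proof -
  have "(\<Sum>s\<in>V. \<Sum>i\<in>N-s. \<Sum>i'\<in>N-s. g i i') = (\<Sum>s\<in>V. \<Sum>i\<in>N. \<Sum>i'\<in>N. if i \<notin> s \<and> i' \<notin> s then g i i' else 0)"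
  proof (rule sum.cong[OF refl])
    fix s
    have "(\<Sum>i\<in>N-s. \<Sum>i'\<in>N-s. g i i') = (\<Sum>i\<in>N. if i \<notin> s then (\<Sum>i'\<in>N. if i' \<notin> s then g i i' else 0) else 0)"
      by (simp add: sum.inter_filter[OF assms(2), symmetric] set_diff_eq)
    also have "\<dots> = (\<Sum>i\<in>N. \<Sum>i'\<in>N. if i \<notin> s \<and> i' \<notin> s then g i i' else 0)"
      by (rule sum.cong[OF refl]) simp
    finally show "(\<Sum>i\<in>N-s. \<Sum>i'\<in>N-s. g i i') = (\<Sum>i\<in>N. \<Sum>i'\<in>N. if i \<notin> s \<and> i' \<notin> s then g i i' else 0)" .
  qed
  also have "\<dots> = (\<Sum>i\<in>N. \<Sum>s\<in>V. \<Sum>i'\<in>N. if i \<notin> s \<and> i' \<notin> s then g i i' else 0)" by (rule sum.swap)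
  also have "\<dots> = (\<Sum>i\<in>N. \<Sum>i'\<in>N. \<Sum>s\<in>V. if i \<notin> s \<and> i' \<notin> s then g i i' else 0)"
    by (rule sum.cong[OF refl], rule sum.swap)
  also have "\<dots> = (\<Sum>i\<in>N. \<Sum>i'\<in>N. g i i' * card {s\<in>V. i \<notin> s \<and> i' \<notin> s})"
    by (intro sum.cong[OF refl]) (simp add: sum.If_cases[OF assms(1)] Int_def)
  finally show ?thesis .
qed

lemma pairs:
  fixes h :: "nat \<Rightarrow> nat \<Rightarrow> real"
  shows "(\<Sum>i=1..n. \<Sum>i'=1..n. h i i') = (\<Sum>i=1..n. h i i) + (\<Sum>i=1..n. \<Sum>i'=i+1..n. h i i' + h i' i)"
proof (induction n)
  case 0 then show ?case by simp
next
  case (Suc n)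
  have a: "(\<Sum>i=1..Suc n. \<Sum>i'=1..Suc n. h i i') = (\<Sum>i=1..n. \<Sum>i'=1..n. h i i') + (\<Sum>i=1..n. h i (Suc n)) + (\<Sum>i'=1..n. h (Suc n) i') + h (Suc n) (Suc n)"
    by (simp add: sum.distrib)
  have b: "(\<Sum>i=1..Suc n. \<Sum>i'=i+1..Suc n. h i i' + h i' i) = (\<Sum>i=1..n. \<Sum>i'=i+1..n. h i i' + h i' i) + (\<Sum>i=1..n. h i (Suc n) + h (Suc n) i)"
  proof -
    have "(\<Sum>i=1..Suc n. \<Sum>i'=i+1..Suc n. h i i' + h i' i) = (\<Sum>i=1..n. \<Sum>i'=i+1..Suc n. h i i' + h i' i)" by simp
    also have "\<dots> = (\<Sum>i=1..n. (\<Sum>i'=i+1..n. h i i' + h i' i) + (h i (Suc n) + h (Suc n) i))"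
      by (rule sum.cong[OF refl]) simp
    finally show ?thesis by (simp add: sum.distrib)
  qed
  show ?case unfolding a b Suc by (simp add: sum.distrib)
qed


theorem theorem3:
  fixes M :: "'w measure"
    and L :: "'y \<Rightarrow> 'y \<Rightarrow> real"
    and yhat :: "nat set \<Rightarrow> nat \<Rightarrow> 'w \<Rightarrow> 'y"
    and y :: "nat \<Rightarrow> 'w \<Rightarrow> 'y"
    and S :: "'w \<Rightarrow> nat set"
    and e :: "nat \<Rightarrow> real"
    and ee :: "nat \<Rightarrow> nat \<Rightarrow> real"
    and n n1 n2 :: nat
  assumes P: "prob_space M"
    and n1_lt: "n1 < n"
    and n2_def: "n2 = n - n1"
    and S_range: "\<forall>w\<in>space M. S w \<subseteq> {1..n} \<and> card (S w) = n1"
    and S_meas: "\<forall>s. {w \<in> space M. S w = s} \<in> sets M"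
    and S_unif: "\<forall>s. s \<subseteq> {1..n} \<and> card s = n1 \<longrightarrow>
                   measure M {w \<in> space M. S w = s} = 1 / real (n choose n1)"
    and L_int: "\<forall>s i. s \<subseteq> {1..n} \<and> card s = n1 \<and> i \<in> {1..n} - s \<longrightarrow>
                   integrable M (\<lambda>w. L (yhat s i w) (y i w))"
    and LL_int: "\<forall>s i i'. s \<subseteq> {1..n} \<and> card s = n1 \<and> i \<in> {1..n} - s \<and> i' \<in> {1..n} - s \<longrightarrow>
                   integrable M (\<lambda>w. L (yhat s i w) (y i w) * L (yhat s i' w) (y i' w))"
    and cond_e: "\<forall>s i. s \<subseteq> {1..n} \<and> card s = n1 \<and> i \<in> {1..n} - s \<longrightarrow>
                   (\<integral>w. indicator {w \<in> space M. S w = s} w * L (yhat s i w) (y i w) \<partial>M)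
                     = e i * measure M {w \<in> space M. S w = s}"
    and cond_ee: "\<forall>s i i'. s \<subseteq> {1..n} \<and> card s = n1 \<and> i \<in> {1..n} - s \<and> i' \<in> {1..n} - s \<longrightarrow>
                   (\<integral>w. indicator {w \<in> space M. S w = s} w *
                        (L (yhat s i w) (y i w) * L (yhat s i' w) (y i' w)) \<partial>M)
                     = ee i i' * measure M {w \<in> space M. S w = s}"
  shows "prob_space.expectation M (\<lambda>w. mu_hat L yhat y n n2 (S w) w)
           = (1 / real n) * (\<Sum>i=1..n. e i)
       \<and> prob_space.variance M (\<lambda>w. mu_hat L yhat y n n2 (S w) w)
           = (1 / (real n ^ 2 * real n2)) *
             ((\<Sum>i=1..n. real n * ee i i - real n2 * (e i)\<^sup>2)
              + (2 / (real n - 1)) *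
                (\<Sum>i=1..n. \<Sum>i'=i+1..n.
                   real n * (real n2 - 1) * ee i i' - (real n - 1) * real n2 * e i * e i'))"
proof -
  interpret prob_space M by (rule P)
  define N where "N = {1..n::nat}"
  define V where "V = {s. s \<subseteq> N \<and> card s = n1}"
  define A where "A s = {w \<in> space M. S w = s}" for s
  define C where "C = real (n choose n1)"
  define X where "X = (\<lambda>w. mu_hat L yhat y n n2 (S w) w)"
  define f where "f s w = mu_hat L yhat y n n2 s w" for s w
  define Li where "Li s i w = L (yhat s i w) (y i w)" for s i w
  have finN: "finite N" unfolding N_def by simp
  have finV: "finite V"
    by (rule finite_subset[of _ "Pow N"]) (auto simp: V_def finN)
  have n2pos: "n2 > 0" using n1_lt n2_def by simp
  have Cpos: "C > 0" unfolding C_def using n1_lt by simp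
  have Asets: "A s \<in> sets M" for s unfolding A_def using S_meas by simp
  have PA: "measure M (A s) = 1 / C" if "s \<in> V" for s
    using S_unif that unfolding A_def C_def V_def N_def by simp
  have SV: "S w \<in> V" if "w \<in> space M" for w using S_range that unfolding V_def N_def by simp
  have f_eq: "f s w = (1 / real n2) * (\<Sum>i\<in>N-s. Li s i w)" for s w
    unfolding f_def mu_hat_def Li_def N_def by simp
  have f2_eq: "(f s w)\<^sup>2 = (1 / real n2 ^ 2) * (\<Sum>i\<in>N-s. \<Sum>i'\<in>N-s. Li s i w * Li s i' w)" for s w
  proof -
    have "(f s w)\<^sup>2 = (1 / real n2)^2 * ((\<Sum>i\<in>N-s. Li s i w) * (\<Sum>i\<in>N-s. Li s i w))"
      unfolding f_eq by (simp add: power2_eq_square)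
    then show ?thesis by (simp add: sum_product power_divide)
  qed
  have X_eq: "X w = (\<Sum>s\<in>V. indicator (A s) w * f s w)" if w: "w \<in> space M" for w
  proof -
    have "(\<Sum>s\<in>V. indicator (A s) w * f s w) = (\<Sum>s\<in>V. if s = S w then f s w else 0)"
      by (rule sum.cong[OF refl]) (auto simp: A_def indicator_def w)
    also have "\<dots> = f (S w) w" using SV[OF w] finV by simp
    finally show ?thesis unfolding X_def f_def by simp
  qed
  have X2_eq: "(X w)\<^sup>2 = (\<Sum>s\<in>V. indicator (A s) w * (f s w)\<^sup>2)" if w: "w \<in> space M" for w
  proof -
    have "(\<Sum>s\<in>V. indicator (A s) w * (f s w)\<^sup>2) = (\<Sum>s\<in>V. if s = S w then (f s w)\<^sup>2 else 0)"
      by (rule sum.cong[OF refl]) (auto simp: A_def indicator_def w)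
    also have "\<dots> = (f (S w) w)\<^sup>2" using SV[OF w] finV by simp
    finally show ?thesis unfolding X_def f_def by simp
  qed
  have sV: "s \<subseteq> {1..n} \<and> card s = n1" if "s \<in> V" for s using that unfolding V_def N_def by simp
  have int_ind: "integrable M (\<lambda>w. indicator (A s) w * g w)" if "integrable M g" for g :: "'w \<Rightarrow> real" and s
    using integrable_mult_indicator[OF Asets that] by simp
  have int_ind2: "integrable M (\<lambda>w. c * (indicator (A s) w * g w))" if "integrable M g" for g :: "'w \<Rightarrow> real" and s c
    using integrable_mult_right[of c M "\<lambda>w. indicator (A s) w * g w"] int_ind[OF that] by blast
  have F1: "(\<lambda>w. indicator (A s) w * f s w) = (\<lambda>w. \<Sum>i\<in>N-s. (1 / real n2) * (indicator (A s) w * Li s i w))" for s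
    unfolding f_eq by (simp add: sum_distrib_left algebra_simps)
  have F2: "(\<lambda>w. indicator (A s) w * (f s w)\<^sup>2) = (\<lambda>w. \<Sum>i\<in>N-s. \<Sum>i'\<in>N-s. (1 / real n2 ^ 2) * (indicator (A s) w * (Li s i w * Li s i' w)))" for s
    unfolding f2_eq by (simp add: sum_distrib_left algebra_simps)
  have int1: "integrable M (\<lambda>w. indicator (A s) w * f s w)" if s: "s \<in> V" for s
    unfolding F1
  proof (rule Bochner_Integration.integrable_sum)
    fix i assume i: "i \<in> N - s"
    have "integrable M (\<lambda>w. L (yhat s i w) (y i w))" using L_int sV[OF s] i unfolding N_def by blast
    then show "integrable M (\<lambda>w. 1 / real n2 * (indicator (A s) w * Li s i w))"
      unfolding Li_def by (rule int_ind2)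
  qed
  have int2: "integrable M (\<lambda>w. indicator (A s) w * (f s w)\<^sup>2)" if s: "s \<in> V" for s
    unfolding F2
  proof (rule Bochner_Integration.integrable_sum, rule Bochner_Integration.integrable_sum)
    fix i i' assume i: "i \<in> N - s" "i' \<in> N - s"
    have "integrable M (\<lambda>w. L (yhat s i w) (y i w) * L (yhat s i' w) (y i' w))" using LL_int sV[OF s] i unfolding N_def by blast
    then show "integrable M (\<lambda>w. 1 / real n2 ^ 2 * (indicator (A s) w * (Li s i w * Li s i' w)))"
      unfolding Li_def by (rule int_ind2)
  qed
  have I1: "(\<integral>w. indicator (A s) w * f s w \<partial>M) = (1 / (real n2 * C)) * (\<Sum>i\<in>N-s. e i)" if s: "s \<in> V" for s
  proof -
    have "(\<integral>w. indicator (A s) w * f s w \<partial>M) = (\<Sum>i\<in>N-s. (1 / real n2) * (\<integral>w. indicator (A s) w * Li s i w \<partial>M))"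
      unfolding F1
      apply (subst Bochner_Integration.integral_sum)
      using L_int sV[OF s] int_ind unfolding Li_def N_def by auto
    also have "\<dots> = (\<Sum>i\<in>N-s. (1 / real n2) * (e i * (1 / C)))"
      apply (rule sum.cong[OF refl])
      using cond_e sV[OF s] PA[OF s] unfolding Li_def N_def A_def by auto
    finally show ?thesis by (simp add: sum_distrib_left sum_divide_distrib)
  qed
  have I2: "(\<integral>w. indicator (A s) w * (f s w)\<^sup>2 \<partial>M) = (1 / (real n2 ^ 2 * C)) * (\<Sum>i\<in>N-s. \<Sum>i'\<in>N-s. ee i i')" if s: "s \<in> V" for s
  proof -
    have "(\<integral>w. indicator (A s) w * (f s w)\<^sup>2 \<partial>M) = (\<Sum>i\<in>N-s. \<Sum>i'\<in>N-s. (1 / real n2 ^ 2) * (\<integral>w. indicator (A s) w * (Li s i w * Li s i' w) \<partial>M))"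
      unfolding F2
      apply (subst Bochner_Integration.integral_sum)
      using LL_int sV[OF s] int_ind apply (force simp: Li_def N_def)
      apply (rule sum.cong[OF refl])
      apply (subst Bochner_Integration.integral_sum)
      using LL_int sV[OF s] int_ind apply (force simp: Li_def N_def)
      apply (rule sum.cong[OF refl])
      apply (subst integral_mult_right_zero) ..
    also have "\<dots> = (\<Sum>i\<in>N-s. \<Sum>i'\<in>N-s. (1 / real n2 ^ 2) * (ee i i' * (1 / C)))"
      apply (intro sum.cong[OF refl])
      using cond_ee sV[OF s] PA[OF s] unfolding Li_def N_def A_def by auto
    finally show ?thesis by (simp add: sum_distrib_left sum_divide_distrib)
  qed
  have intX: "integrable M X"
    by (rule Bochner_Integration.integrable_cong[THEN iffD2, OF refl X_eq]) (auto intro!: Bochner_Integration.integrable_sum int1)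
  have intX2: "integrable M (\<lambda>w. (X w)\<^sup>2)"
    by (rule Bochner_Integration.integrable_cong[THEN iffD2, OF refl X2_eq]) (auto intro!: Bochner_Integration.integrable_sum int2)
  have EX: "expectation X = (1 / (real n2 * C)) * (\<Sum>s\<in>V. \<Sum>i\<in>N-s. e i)"
  proof -
    have "expectation X = (\<integral>w. (\<Sum>s\<in>V. indicator (A s) w * f s w) \<partial>M)"
      by (rule Bochner_Integration.integral_cong[OF refl X_eq])
    also have "\<dots> = (\<Sum>s\<in>V. \<integral>w. indicator (A s) w * f s w \<partial>M)"
      by (rule Bochner_Integration.integral_sum) (use int1 in auto)
    also have "\<dots> = (\<Sum>s\<in>V. (1 / (real n2 * C)) * (\<Sum>i\<in>N-s. e i))"
      by (rule sum.cong[OF refl]) (rule I1)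
    finally show ?thesis by (simp add: sum_distrib_left)
  qed
  have EX2: "expectation (\<lambda>w. (X w)\<^sup>2) = (1 / (real n2 ^ 2 * C)) * (\<Sum>s\<in>V. \<Sum>i\<in>N-s. \<Sum>i'\<in>N-s. ee i i')"
  proof -
    have "expectation (\<lambda>w. (X w)\<^sup>2) = (\<integral>w. (\<Sum>s\<in>V. indicator (A s) w * (f s w)\<^sup>2) \<partial>M)"
      by (rule Bochner_Integration.integral_cong[OF refl X2_eq])
    also have "\<dots> = (\<Sum>s\<in>V. \<integral>w. indicator (A s) w * (f s w)\<^sup>2 \<partial>M)"
      by (rule Bochner_Integration.integral_sum) (use int2 in auto)
    also have "\<dots> = (\<Sum>s\<in>V. (1 / (real n2 ^ 2 * C)) * (\<Sum>i\<in>N-s. \<Sum>i'\<in>N-s. ee i i'))"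
      by (rule sum.cong[OF refl]) (rule I2)
    finally show ?thesis by (simp add: sum_distrib_left)
  qed

  define C1 where "C1 = real ((n-1) choose n1)"
  define C2 where "C2 = real ((n-2) choose n1)"
  have c1: "card {s\<in>V. i \<notin> s} = (n-1) choose n1" if "i \<in> N" for i
  proof -
    have "{s\<in>V. i \<notin> s} = {s. (s \<subseteq> {1..n} \<and> card s = n1) \<and> i \<notin> s}" unfolding V_def N_def by auto
    then show ?thesis using count1[of i n n1] that unfolding N_def by simp
  qed
  have c2: "card {s\<in>V. i \<notin> s \<and> i' \<notin> s} = (if i = i' then (n-1) choose n1 else (n-2) choose n1)"
    if "i \<in> N" "i' \<in> N" for i i'
  proof (cases "i = i'")
    case True then show ?thesis using c1[OF that(1)] by simp
  next
    case False
    have "{s\<in>V. i \<notin> s \<and> i' \<notin> s} = {s. (s \<subseteq> {1..n} \<and> card s = n1) \<and> i \<notin> s \<and> i' \<notin> s}" unfolding V_def N_def by auto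
    then show ?thesis using count2[of i n i' n1] that False unfolding N_def by simp
  qed
  have C1eq: "C1 * real n = C * real n2"
  proof -
    have "(n - n1) * (n choose n1) = n * ((n - 1) choose n1)" by (rule binomial_absorb_comp)
    then have "real (n - n1) * C = real n * C1" unfolding C_def C1_def by (metis of_nat_mult)
    then show ?thesis using n2_def by (simp add: algebra_simps)
  qed
  have C2eq: "C2 * (real n * (real n - 1)) = C * (real n2 * (real n2 - 1))"
  proof -
    have a: "(n - n1) * (n choose n1) = n * ((n - 1) choose n1)" by (rule binomial_absorb_comp)
    have b: "(n - 1 - n1) * ((n - 1) choose n1) = (n - 1) * ((n - 1 - 1) choose n1)" by (rule binomial_absorb_comp)
    have "(n - n1) * (n - n1 - 1) * (n choose n1) = n * (n - 1) * ((n - 2) choose n1)"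
    proof -
      have "(n - n1) * (n - n1 - 1) * (n choose n1) = (n - n1 - 1) * ((n - n1) * (n choose n1))" by simp
      also have "\<dots> = n * ((n - 1 - n1) * ((n - 1) choose n1))" unfolding a by (simp add: diff_commute)
      also have "\<dots> = n * (n - 1) * ((n - 2) choose n1)" unfolding b by (simp add: numeral_2_eq_2)
      finally show ?thesis .
    qed
    then have e: "real (n - n1) * real (n - n1 - 1) * real (n choose n1) = real n * real (n - 1) * real ((n - 2) choose n1)"
      by (metis of_nat_mult)
    have r1: "real (n - n1) = real n2" using n2_def by simp
    have r2: "real (n - n1 - 1) = real n2 - 1" using n2pos n2_def by (simp add: of_nat_diff)
    have r3: "real (n - 1) = real n - 1" using n1_lt by (simp add: of_nat_diff)
    show ?thesis using e unfolding r1 r2 r3 C_def C2_def by (simp add: algebra_simps)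
  qed
  have sym: "ee i i' = ee i' i" if "C2 \<noteq> 0" "i \<in> N" "i' \<in> N" "i \<noteq> i'" for i i'
  proof -
    have "n1 \<le> n - 2" using that(1) unfolding C2_def by (metis binomial_eq_0 not_le of_nat_0)
    moreover have "card (N - {i, i'}) = n - 2" using that(2-4) unfolding N_def by (simp add: card_Diff_subset)
    ultimately obtain s where s: "s \<subseteq> N - {i, i'}" "card s = n1"
      using obtain_subset_with_card_n by metis
    have sv: "s \<in> V" using s unfolding V_def by auto
    have "ee i i' * measure M (A s) = ee i' i * measure M (A s)"
      using cond_ee[rule_format, of s i i'] cond_ee[rule_format, of s i' i] s that(2,3) sv
      unfolding A_def N_def V_def by (auto simp: mult.commute mult.left_commute)
    then show ?thesis using PA[OF sv] Cpos by simp
  qed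
  define SE where "SE = (\<Sum>i=1..n. e i)"
  define SE2 where "SE2 = (\<Sum>i=1..n. (e i)\<^sup>2)"
  define U where "U = (\<Sum>i=1..n. \<Sum>i'=i+1..n. e i * e i')"
  define D where "D = (\<Sum>i=1..n. ee i i)"
  define T where "T = (\<Sum>i=1..n. \<Sum>i'=i+1..n. ee i i')"
  have EXv: "expectation X = (1 / (real n2 * C)) * C1 * SE"
  proof -
    have "(\<Sum>s\<in>V. \<Sum>i\<in>N-s. e i) = (\<Sum>i\<in>N. e i * real (card {s\<in>V. i \<notin> s}))"
      by (rule swap1[OF finV finN])
    also have "\<dots> = (\<Sum>i\<in>N. e i * C1)"
      by (rule sum.cong[OF refl]) (simp add: c1 C1_def)
    also have "\<dots> = C1 * SE" unfolding SE_def N_def by (simp add: sum_distrib_left mult.commute)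
    finally show ?thesis unfolding EX by simp
  qed
  have SEsq: "SE\<^sup>2 = SE2 + 2 * U"
  proof -
    have "SE\<^sup>2 = (\<Sum>i=1..n. \<Sum>i'=1..n. e i * e i')" unfolding SE_def power2_eq_square sum_product ..
    also have "\<dots> = (\<Sum>i=1..n. e i * e i) + (\<Sum>i=1..n. \<Sum>i'=i+1..n. e i * e i' + e i' * e i)" by (rule pairs)
    finally show ?thesis unfolding SE2_def U_def
      by (simp add: power2_eq_square sum.distrib sum_distrib_left mult.commute)
  qed
  have EX2v: "expectation (\<lambda>w. (X w)\<^sup>2) = (1 / (real n2 ^ 2 * C)) * (C1 * D + 2 * C2 * T)"
  proof -
    have "(\<Sum>s\<in>V. \<Sum>i\<in>N-s. \<Sum>i'\<in>N-s. ee i i') = (\<Sum>i=1..n. \<Sum>i'=1..n. ee i i' * card {s\<in>V. i \<notin> s \<and> i' \<notin> s})"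
      using swap2[OF finV finN, of ee] by (simp add: N_def)
    also have "\<dots> = (\<Sum>i=1..n. ee i i * card {s\<in>V. i \<notin> s \<and> i \<notin> s}) + (\<Sum>i=1..n. \<Sum>i'=i+1..n. ee i i' * card {s\<in>V. i \<notin> s \<and> i' \<notin> s} + ee i' i * card {s\<in>V. i' \<notin> s \<and> i \<notin> s})"
      by (rule pairs)
    also have "\<dots> = C1 * D + 2 * C2 * T"
    proof -
      have "(\<Sum>i=1..n. ee i i * card {s\<in>V. i \<notin> s \<and> i \<notin> s}) = C1 * D"
        unfolding D_def C1_def sum_distrib_left
        by (rule sum.cong[OF refl]) (auto simp: c1[unfolded N_def])
      moreover have "(\<Sum>i=1..n. \<Sum>i'=i+1..n. ee i i' * card {s\<in>V. i \<notin> s \<and> i' \<notin> s} + ee i' i * card {s\<in>V. i' \<notin> s \<and> i \<notin> s}) = 2 * C2 * T"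
        unfolding T_def sum_distrib_left
      proof (intro sum.cong[OF refl])
        fix i i' assume i: "i \<in> {1..n}" and i': "i' \<in> {i+1..n}"
        have ne: "i \<noteq> i'" "i' \<in> N" "i \<in> N" using i i' unfolding N_def by auto
        have "ee i i' * C2 + ee i' i * C2 = 2 * C2 * ee i i'"
          using sym[of i i'] ne by (cases "C2 = 0") auto
        then show "ee i i' * card {s\<in>V. i \<notin> s \<and> i' \<notin> s} + ee i' i * card {s\<in>V. i' \<notin> s \<and> i \<notin> s} = 2 * C2 * ee i i'"
          using c2[OF ne(3,2)] c2[OF ne(2,3)] ne unfolding C2_def by auto
      qed
      ultimately show ?thesis by simp
    qed
    finally show ?thesis unfolding EX2 by simp
  qed
  have R1: "(\<Sum>i=1..n. real n * ee i i - real n2 * (e i)\<^sup>2) = real n * D - real n2 * SE2"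
    unfolding D_def SE2_def by (simp add: sum_subtractf sum_distrib_left)
  have R2: "(\<Sum>i=1..n. \<Sum>i'=i+1..n. real n * (real n2 - 1) * ee i i' - (real n - 1) * real n2 * e i * e i')
      = real n * (real n2 - 1) * T - (real n - 1) * real n2 * U"
    unfolding T_def U_def by (simp add: sum_subtractf sum_distrib_left mult.assoc)
  have var: "variance X = expectation (\<lambda>w. (X w)\<^sup>2) - (expectation X)\<^sup>2"
    by (rule variance_eq[OF intX intX2])
  have nge: "n \<ge> 1" using n1_lt by simp
  have E1: "expectation X = (1 / real n) * SE"
    unfolding EXv using C1eq n2pos Cpos nge by (simp add: field_simps)
  have V0: "variance X = (1 / (real n2 ^ 2 * C)) * (C1 * D + 2 * C2 * T) - ((1 / real n) * SE)\<^sup>2"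
    by (subst var, subst EX2v, subst E1, rule refl)
  have V1: "variance X = (1 / (real n ^ 2 * real n2)) * ((real n * D - real n2 * SE2)
        + (2 / (real n - 1)) * (real n * (real n2 - 1) * T - (real n - 1) * real n2 * U))"
  proof (cases "n = 1")
    case True
    then have "T = 0" "U = 0" unfolding T_def U_def by simp_all
    moreover have "n2 = 1" using True n1_lt n2_def by simp
    ultimately show ?thesis unfolding V0 power_mult_distrib SEsq using True C1eq Cpos by (simp add: field_simps power2_eq_square)
  next
    case False
    then have n2': "real n - 1 \<noteq> 0" "real n \<noteq> 0" using nge by auto
    have C1v: "C1 = C * real n2 / real n" using C1eq n2' by (simp add: field_simps)
    have C2v: "C2 = C * (real n2 * (real n2 - 1)) / (real n * (real n - 1))" using C2eq n2' by (simp add: field_simps)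
    show ?thesis unfolding V0 power_mult_distrib SEsq C1v C2v using n2' Cpos n2pos
      by (simp add: field_simps power2_eq_square)
  qed
  show ?thesis
  proof (rule conjI)
    show "expectation (\<lambda>w. mu_hat L yhat y n n2 (S w) w) = 1 / real n * (\<Sum>i = 1..n. e i)"
      using E1 unfolding X_def SE_def .
    show "variance (\<lambda>w. mu_hat L yhat y n n2 (S w) w) = 1 / ((real n)\<^sup>2 * real n2) *
      ((\<Sum>i = 1..n. real n * ee i i - real n2 * (e i)\<^sup>2) +
       2 / (real n - 1) * (\<Sum>i = 1..n. \<Sum>i' = i + 1..n. real n * (real n2 - 1) * ee i i' - (real n - 1) * real n2 * e i * e i'))"
      unfolding R1 R2 using V1 unfolding X_def .
  qed
qed

end
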